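(* Let $(S_n,X_n)_{n\ge 0}$ be an alternating non-homogeneous semi-Markov process with $S_0=1$, $X_0=0$, whose semi-Markov kernels $G_Y(x,\cdot)$ and $G_Z(x,\cdot)$ are, for each $x\ge 0$, Gamma distributions with shape and rate parameters $(k_Y(x),\lambda_Y(x))$ and $(k_Z(x),\lambda_Z(x))$ respectively, i.e. with densities $$g_T(x,\tau)=\frac{\lambda_T(x)^{k_T(x)}\tau^{k_T(x)-1}e^{-\lambda_T(x)\tau}}{\Gamma(k_T(x))},\qquad \tau\ge 0,\ T\in\{Y,Z\},$$ where $k_Y,k_Z:[0,\infty)\to[1,\infty)$ and $\lambda_Y,\lambda_Z:[0,\infty)\to(0,\infty)$ are measurable. Suppose there is $c>0$ such that $\lambda_Y(x)\le c$ and $\lambda_Z(x)\le c$ for all $x\ge 0$. Then $\mathbb P(X_\infty<\infty)=0$.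
   Context: Let $(S_n,X_n)_{n\ge0}$ be random variables on a probability space with $S_n\in\{0,1\}$, $0=X_0\le X_1\le X_2\le\cdots$, $S_0=1$, and alternating states: $S_n=1$ for even $n$ and $S_n=0$ for odd $n$. Write $T_{n+1}=X_{n+1}-X_n$ (sojourn times). The process is called an alternating non-homogeneous semi-Markov process with semi-Markov kernels $G_Y,G_Z$ if for every $n\ge 0$ the conditional distribution of $T_{n+1}$ given $(S_0,X_0),\dots,(S_n,X_n)$ depends only on $(S_n,X_n)$ (and not on $n$), with $\mathbb P(T_{n+1}\le \tau\mid S_n=1,X_n=x)=G_Y(x,\tau)$ and $\mathbb P(T_{n+1}\le\tau\mid S_n=0,X_n=x)=G_Z(x,\tau)$ for all $x,\tau\ge 0$; here for each $x\ge0$, $G_Y(x,\cdot)$ and $G_Z(x,\cdot)$ are distribution functions on $[0,\infty)$, jointly measurable in $(x,\tau)$, absolutely continuous with densities $g_Y(x,\cdot)$, $g_Z(x,\cdot)$. Periods spent in state $1$ are called $Y$-phases, periods in state $0$ are $Z$-phases. The explosion time is $X_\infty=\lim_{n\to\infty}X_n$. *)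

theory Defs
  imports "HOL-Probability.Probability"
begin

definition gamma_density :: "real \<Rightarrow> real \<Rightarrow> real \<Rightarrow> real" where
  "gamma_density k l t =
     (if t \<ge> 0 then l powr k * t powr (k - 1) * exp (- l * t) / Gamma k else 0)"

definition gamma_cdf :: "real \<Rightarrow> real \<Rightarrow> real \<Rightarrow> real" where
  "gamma_cdf k l \<tau> = (LINT t:{0..\<tau>}|lborel. gamma_density k l t)"

definition hist_alg ::
  "'a measure \<Rightarrow> (nat \<Rightarrow> 'a \<Rightarrow> nat) \<Rightarrow> (nat \<Rightarrow> 'a \<Rightarrow> real) \<Rightarrow> nat \<Rightarrow> 'a measure" where
  "hist_alg M S X n = sigma (space M)
     ({S i -` A \<inter> space M | i A. i \<le> n} \<union>
      {X i -` B \<inter> space M | i B. i \<le> n \<and> B \<in> sets borel})"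

definition alt_semi_markov ::
  "'a measure \<Rightarrow> (nat \<Rightarrow> 'a \<Rightarrow> nat) \<Rightarrow> (nat \<Rightarrow> 'a \<Rightarrow> real)
    \<Rightarrow> (real \<Rightarrow> real \<Rightarrow> real) \<Rightarrow> (real \<Rightarrow> real \<Rightarrow> real) \<Rightarrow> bool" where
  "alt_semi_markov M S X GY GZ \<longleftrightarrow>
     prob_space M \<and>
     (\<forall>n. X n \<in> borel_measurable M) \<and>
     (\<forall>n. \<forall>\<omega>\<in>space M. S n \<omega> = (if even n then 1 else 0)) \<and>
     (\<forall>\<omega>\<in>space M. X 0 \<omega> = 0) \<and>
     (\<forall>n. \<forall>\<omega>\<in>space M. X n \<omega> \<le> X (Suc n) \<omega>) \<and>
     (\<forall>n \<tau>. \<tau> \<ge> 0 \<longrightarrow>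
        (AE \<omega> in M. real_cond_exp M (hist_alg M S X n)
             (indicator {\<omega>'\<in>space M. X (Suc n) \<omega>' - X n \<omega>' \<le> \<tau>}) \<omega>
           = (if S n \<omega> = 1 then GY (X n \<omega>) \<tau> else GZ (X n \<omega>) \<tau>)))"

end

theory Submission
  imports Defs
begin
lemma Gamma_ge1: assumes "(x::real) \<ge> 2" shows "Gamma x \<ge> 1"
proof (cases "x = 2")
  case True
  have "Gamma (2::real) = 1" by (simp add: Gamma_numeral)
  then show ?thesis using True by simp
next
  case False
  then have "Gamma (2::real) < Gamma x" using assms by (intro Gamma_real_strict_mono) auto
  moreover have "Gamma (2::real) = 1" by (simp add: Gamma_numeral)
  ultimately show ?thesis by simp
qed

lemma k_pow_bound: assumes "(k::real) \<ge> 1" shows "k * (1/4) powr k \<le> 1/4"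
proof -
  have "k \<le> 1 + (k - 1) * ln 4"
  proof -
    have "ln (4::real) \<ge> 1"
    proof -
      have "exp (1::real) \<le> 4" using exp_le by linarith
      then show ?thesis using ln_ge_iff[of 4 1] by simp
    qed
    moreover have "k-1 \<le> (k-1)*ln 4" using mult_left_mono[of 1 "ln 4" "k-1"] assms \<open>ln 4 \<ge> 1\<close> by simp
    ultimately show ?thesis by linarith
  qed
  also have "\<dots> \<le> exp ((k - 1) * ln 4)" by (rule exp_ge_add_one_self)
  also have "\<dots> = 4 powr (k - 1)" by (simp add: powr_def)
  finally have "k \<le> 4 powr (k-1)" .
  moreover have "(1/4::real) powr k = 1 / (4 powr (k-1) * 4)"
    by (simp add: powr_diff powr_divide)
  moreover have P: "0 < (4::real) powr (k-1)" by simp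
  ultimately have "k / 4 powr (k-1) \<le> 1" by (simp add: pos_divide_le_eq)
  then have "(k / 4 powr (k-1)) * (1/4) \<le> 1 * (1/4)" by (rule mult_right_mono) simp
  moreover have "k * (1 / (4 powr (k-1) * 4)) = (k / 4 powr (k-1)) * (1/4)" by simp
  ultimately show ?thesis using \<open>(1/4::real) powr k = 1 / (4 powr (k-1) * 4)\<close> by simp
qed

lemma gamma_bound:
  assumes k: "k \<ge> 1" and l: "0 < l" "l \<le> c"
  shows "gamma_cdf k l (1/(4*c)) \<le> 1/2"
proof -
  define \<tau> where "\<tau> = 1/(4*c)"
  have c: "c > 0" using l by simp
  have tau: "\<tau> > 0" using c by (simp add: \<tau>_def)
  define C where "C = l powr k * \<tau> powr (k - 1) / Gamma k"
  have Gk: "Gamma k > 0" using k by (intro Gamma_real_pos) simp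
  have bnd: "gamma_density k l t \<le> C" if "t \<in> {0..\<tau>}" for t
  proof -
    have "t powr (k-1) \<le> \<tau> powr (k-1)" using that k by (intro powr_mono2) auto
    moreover have "exp (- l * t) \<le> 1" using that l by simp
    ultimately have "l powr k * t powr (k - 1) * exp (- l * t) \<le> l powr k * \<tau> powr (k - 1)"
    proof -
      have "l powr k * t powr (k - 1) * exp (- l * t) \<le> l powr k * t powr (k - 1) * 1"
        by (rule mult_left_mono) (use \<open>exp (- l * t) \<le> 1\<close> in auto)
      also have "\<dots> \<le> l powr k * \<tau> powr (k - 1)"
        using \<open>t powr (k-1) \<le> \<tau> powr (k-1)\<close> by (simp add: mult_left_mono)
      finally show ?thesis .
    qed
    then show ?thesis using that Gk unfolding gamma_density_def C_def
      by (simp add: divide_right_mono)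
  qed
  have "gamma_cdf k l \<tau> \<le> C * \<tau>"
  proof (cases "set_integrable lborel {0..\<tau>} (gamma_density k l)")
    case True
    have "(LINT t:{0..\<tau>}|lborel. gamma_density k l t) \<le> (LINT t:{0..\<tau>}|lborel. C)"
    proof (rule set_integral_mono)
      have "integrable lborel (indicator {0..\<tau>} :: real \<Rightarrow> real)" using tau by (intro integrable_real_indicator) auto
      then show "set_integrable lborel {0..\<tau>} (\<lambda>x. C)" unfolding set_integrable_def
        using integrable_mult_left[of C lborel "indicator {0..\<tau>} :: real \<Rightarrow> real"] by (simp add: mult.commute)
    qed (use True bnd in auto)
    also have "\<dots> = C * \<tau>" using tau by (subst set_integral_const) (auto simp: mult.commute)
    finally show ?thesis unfolding gamma_cdf_def .
  next
    case False
    then have "gamma_cdf k l \<tau> = 0" unfolding gamma_cdf_def set_lebesgue_integral_def set_integrable_def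
      by (simp add: not_integrable_integral_eq)
    moreover have "C \<ge> 0" using Gk unfolding C_def by simp
    ultimately show ?thesis using tau by simp
  qed
  also have "C * \<tau> = (l*\<tau>) powr k / Gamma k"
    unfolding C_def using tau l
    by (simp add: powr_mult powr_diff field_simps)
  also have "\<dots> = k * (l*\<tau>) powr k / Gamma (k+1)"
  proof -
    have "Gamma (k+1) = k * Gamma k" using Gamma_plus1[of k] k nonpos_Ints_nonpos[of k] by force
    then show ?thesis using k Gk by (simp add: field_simps)
  qed
  also have "\<dots> \<le> k * (l*\<tau>) powr k"
  proof -
    have "Gamma (k+1) \<ge> 1" using k by (intro Gamma_ge1) simp
    moreover have "k * (l*\<tau>) powr k \<ge> 0" using k by simp
    ultimately have "k * (l*\<tau>) powr k / Gamma (k+1) \<le> k * (l*\<tau>) powr k / 1"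
      by (intro divide_left_mono) auto
    then show ?thesis by simp
  qed
  also have "\<dots> \<le> k * (1/4) powr k"
  proof -
    have "l * \<tau> \<le> 1/4" using l c unfolding \<tau>_def by (simp add: field_simps)
    then show ?thesis using k l tau by (intro mult_left_mono powr_mono2) auto
  qed
  also have "\<dots> \<le> 1/2" using k_pow_bound[OF k] by simp
  finally show ?thesis unfolding \<tau>_def .
qed
lemma main_prob:
  fixes M :: "'a measure" and S :: "nat \<Rightarrow> 'a \<Rightarrow> nat" and X :: "nat \<Rightarrow> 'a \<Rightarrow> real"
  assumes asm: "alt_semi_markov M S X GY GZ"
    and \<tau>pos: "\<tau> > 0"
    and GYb: "\<And>x. x \<ge> 0 \<Longrightarrow> GY x \<tau> \<le> 1/2"
    and GZb: "\<And>x. x \<ge> 0 \<Longrightarrow> GZ x \<tau> \<le> 1/2"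
  shows "measure M {\<omega>\<in>space M. \<exists>B. \<forall>n. X n \<omega> \<le> B} = 0"
proof -
  note a = asm[unfolded alt_semi_markov_def]
  interpret prob_space M using a by simp
  have Xm[measurable]: "\<And>n. X n \<in> borel_measurable M" using a by simp
  have Sc: "\<And>n \<omega>. \<omega> \<in> space M \<Longrightarrow> S n \<omega> = (if even n then 1 else 0)" using a by simp
  have X0: "\<And>\<omega>. \<omega> \<in> space M \<Longrightarrow> X 0 \<omega> = 0" using a by simp
  have Xmono: "\<And>n \<omega>. \<omega> \<in> space M \<Longrightarrow> X n \<omega> \<le> X (Suc n) \<omega>" using a by simp
  have Xmono': "X n \<omega> \<le> X (n + i) \<omega>" if "\<omega> \<in> space M" for n i \<omega>
    by (induction i) (auto intro: order_trans Xmono[OF that])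
  have Xnn: "X n \<omega> \<ge> 0" if "\<omega> \<in> space M" for n \<omega>
    using Xmono'[OF that, of 0 n] X0[OF that] by simp
  have aAE: "\<forall>n \<tau>. \<tau> \<ge> 0 \<longrightarrow>
        (AE \<omega> in M. real_cond_exp M (hist_alg M S X n)
             (indicator {\<omega>'\<in>space M. X (Suc n) \<omega>' - X n \<omega>' \<le> \<tau>}) \<omega>
           = (if S n \<omega> = 1 then GY (X n \<omega>) \<tau> else GZ (X n \<omega>) \<tau>))"
    using asm unfolding alt_semi_markov_def by (elim conjE) assumption
  define A where "A n = {\<omega>'\<in>space M. X (Suc n) \<omega>' - X n \<omega>' \<le> \<tau>}" for n
  have AE: "AE \<omega> in M. real_cond_exp M (hist_alg M S X n) (indicator (A n)) \<omega>
           = (if S n \<omega> = 1 then GY (X n \<omega>) \<tau> else GZ (X n \<omega>) \<tau>)" for n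
    unfolding A_def by (rule aAE[rule_format, OF less_imp_le[OF \<tau>pos]])
  define G where "G n = {S i -` B \<inter> space M | i B. i \<le> n} \<union>
      {X i -` B \<inter> space M | i B. i \<le> n \<and> B \<in> sets borel}" for n
  have Gsub: "G n \<subseteq> sets M" for n
  proof
    fix C assume "C \<in> G n"
    then consider (s) i B where "C = S i -` B \<inter> space M" | (x) i B where "C = X i -` B \<inter> space M" "B \<in> sets borel"
      unfolding G_def by blast
    then show "C \<in> sets M"
    proof cases
      case s
      have "C = (if (if even i then 1 else 0) \<in> B then space M else {})"
        using s Sc by auto
      then show ?thesis by simp
    next
      case x
      then show ?thesis using measurable_sets[OF Xm x(2)] by simp
    qed
  qed
  have GPow: "G n \<subseteq> Pow (space M)" for n using Gsub sets.sets_into_space by blast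
  have sp: "space (hist_alg M S X n) = space M" for n
    unfolding hist_alg_def G_def[symmetric] using space_measure_of[OF GPow] by simp
  have st: "sets (hist_alg M S X n) = sigma_sets (space M) (G n)" for n
    unfolding hist_alg_def G_def[symmetric] using sets_measure_of[OF GPow] by simp
  have subalg: "subalgebra M (hist_alg M S X n)" for n
    unfolding subalgebra_def sp st using sets.sigma_sets_subset[OF Gsub] by simp
  have sfs: "sigma_finite_subalgebra M (hist_alg M S X n)" for n
  proof -
    interpret finite_measure_subalgebra M "hist_alg M S X n"
      by unfold_locales (rule subalg)
    show ?thesis by unfold_locales
  qed
  have Xmeas: "X i \<in> borel_measurable (hist_alg M S X n)" if "i \<le> n" for i n
  proof (rule measurableI)
    fix B :: "real set" assume "B \<in> sets borel"
    then have "X i -` B \<inter> space M \<in> G n" unfolding G_def using that by blast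
    then show "X i -` B \<inter> space (hist_alg M S X n) \<in> sets (hist_alg M S X n)"
      unfolding sp st by (rule sigma_sets.Basic)
  qed simp
  have Ameas: "A i \<in> sets (hist_alg M S X n)" if "Suc i \<le> n" for i n
  proof -
    have [measurable]: "X i \<in> borel_measurable (hist_alg M S X n)" "X (Suc i) \<in> borel_measurable (hist_alg M S X n)"
      using that by (auto intro: Xmeas)
    have "{\<omega>'\<in>space (hist_alg M S X n). X (Suc i) \<omega>' - X i \<omega>' \<le> \<tau>} \<in> sets (hist_alg M S X n)"
      by measurable
    then show ?thesis unfolding A_def sp .
  qed
  have AM[measurable]: "A i \<in> sets M" for i unfolding A_def by measurable
  have key: "measure M (C \<inter> A n) \<le> 1/2 * measure M C" if C: "C \<in> sets (hist_alg M S X n)" for C n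
  proof -
    interpret sigma_finite_subalgebra M "hist_alg M S X n" by (rule sfs)
    have CM: "C \<in> sets M" using C subalg unfolding subalgebra_def by blast
    have intA: "integrable M (indicator (A n) :: 'a \<Rightarrow> real)" using AM by (intro integrable_real_indicator) (auto simp: emeasure_eq_measure)
    have "measure M (C \<inter> A n) = (\<integral>x. indicator C x * indicator (A n) x \<partial>M)"
      using CM by (simp add: indicator_inter_arith[symmetric] Int_absorb2 sets.sets_into_space)
    also have "\<dots> = (\<integral>x\<in>C. indicator (A n) x \<partial>M)" unfolding set_lebesgue_integral_def by simp
    also have "\<dots> = (\<integral>x\<in>C. real_cond_exp M (hist_alg M S X n) (indicator (A n)) x \<partial>M)"
      by (rule real_cond_exp_intA[OF intA C])
    also have "\<dots> = (\<integral>x. indicator C x * real_cond_exp M (hist_alg M S X n) (indicator (A n)) x \<partial>M)"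
      unfolding set_lebesgue_integral_def by simp
    also have "\<dots> \<le> (\<integral>x. indicator C x * (1/2) \<partial>M)"
    proof (rule integral_mono_AE)
      show "integrable M (\<lambda>x. indicator C x * real_cond_exp M (hist_alg M S X n) (indicator (A n)) x)"
        using integrable_mult_indicator[OF CM real_cond_exp_int(1)[OF intA]] by simp
      show "integrable M (\<lambda>x. indicator C x * (1/2::real))"
        using integrable_mult_left[OF integrable_real_indicator[OF CM], of "1/2"] by (simp add: emeasure_eq_measure mult.commute)
      show "AE x in M. indicator C x * real_cond_exp M (hist_alg M S X n) (indicator (A n)) x \<le> indicator C x * (1/2)"
        using AE[of n]
      proof eventually_elim
        case (elim x)
        show ?case
        proof (cases "x \<in> C")
          case True
          then have "x \<in> space M" using sets.sets_into_space[OF CM] by blast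
          then have "GY (X n x) \<tau> \<le> 1/2" "GZ (X n x) \<tau> \<le> 1/2" using GYb GZb Xnn by auto
          then show ?thesis using elim True by (auto simp: indicator_def)
        qed simp
      qed
    qed
    also have "\<dots> = 1/2 * measure M C" using CM by simp
    finally show ?thesis .
  qed
  define E where "E m j = {\<omega>\<in>space M. \<forall>i\<in>{..<j}. \<omega> \<in> A (m+i)}" for m j
  have Emeas: "E m j \<in> sets (hist_alg M S X (m+j))" for m j
  proof -
    let ?N = "hist_alg M S X (m+j)"
    have "{\<omega>\<in>space ?N. \<forall>i\<in>{..<j}. \<omega> \<in> A (m+i)} \<in> sets ?N"
    proof (rule sets.sets_Collect_finite_All)
      fix i assume "i \<in> {..<j}"
      then have Ai: "A (m+i) \<in> sets ?N" by (intro Ameas) simp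
      moreover have "{x \<in> space ?N. x \<in> A (m + i)} = A (m+i)"
        using sets.sets_into_space[OF Ai] by blast
      ultimately show "{x \<in> space ?N. x \<in> A (m + i)} \<in> sets ?N" by simp
    qed simp
    then show ?thesis unfolding E_def sp .
  qed
  have Ebound: "measure M (E m j) \<le> (1/2)^j" for m j
  proof (induction j)
    case 0
    then show ?case by (simp add: E_def)
  next
    case (Suc j)
    have "E m (Suc j) = E m j \<inter> A (m+j)" unfolding E_def by (auto simp: less_Suc_eq)
    then have "measure M (E m (Suc j)) \<le> 1/2 * measure M (E m j)" using key[OF Emeas[of m j]] by simp
    also have "\<dots> \<le> 1/2 * (1/2)^j" using Suc by simp
    finally show ?case by simp
  qed
  define N where "N m = {\<omega>\<in>space M. \<forall>i. X (Suc (m+i)) \<omega> - X (m+i) \<omega> \<le> \<tau>}" for m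
  have NM[measurable]: "N m \<in> sets M" for m unfolding N_def by measurable
  have N0: "measure M (N m) = 0" for m
  proof -
    have "measure M (N m) \<le> (1/2)^j" for j
    proof -
      have "N m \<subseteq> E m j" unfolding N_def E_def A_def by auto
      then have "measure M (N m) \<le> measure M (E m j)"
        using Emeas[of m j] subalg unfolding subalgebra_def by (intro finite_measure_mono) auto
      then show ?thesis using Ebound[of m j] by simp
    qed
    moreover have "(\<lambda>j. (1/2::real)^j) \<longlonglongrightarrow> 0" by (intro LIMSEQ_realpow_zero) auto
    ultimately have "measure M (N m) \<le> 0" by (intro LIMSEQ_le_const[of "\<lambda>j. (1/2::real)^j"]) auto
    then show ?thesis by (simp add: measure_le_0_iff)
  qed
  have UN0: "emeasure M (\<Union>m. N m) = 0"
    by (rule emeasure_UN_eq_0) (auto simp: emeasure_eq_measure N0)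
  have sub: "{\<omega>\<in>space M. \<exists>B. \<forall>n. X n \<omega> \<le> B} \<subseteq> (\<Union>m. N m)"
  proof
    fix \<omega> assume "\<omega> \<in> {\<omega>\<in>space M. \<exists>B. \<forall>n. X n \<omega> \<le> B}"
    then obtain B where \<omega>: "\<omega> \<in> space M" and B: "\<And>n. X n \<omega> \<le> B" by auto
    show "\<omega> \<in> (\<Union>m. N m)"
    proof (rule ccontr)
      assume "\<omega> \<notin> (\<Union>m. N m)"
      then have jump: "\<forall>m. \<exists>i. X (Suc (m+i)) \<omega> - X (m+i) \<omega> > \<tau>" using \<omega> unfolding N_def by (auto simp: not_le)
      have "\<exists>n. X n \<omega> \<ge> real j * \<tau>" for j
      proof (induction j)
        case 0 show ?case using X0[OF \<omega>] by (intro exI[of _ 0]) simp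
      next
        case (Suc j)
        then obtain n where n: "X n \<omega> \<ge> real j * \<tau>" by auto
        obtain i where i: "X (Suc (n+i)) \<omega> - X (n+i) \<omega> > \<tau>" using jump by auto
        have "X n \<omega> \<le> X (n+i) \<omega>" by (rule Xmono'[OF \<omega>])
        then have "X (Suc (n+i)) \<omega> \<ge> real (Suc j) * \<tau>" using n i by (simp add: algebra_simps)
        then show ?case by blast
      qed
      moreover obtain j :: nat where "real j > B / \<tau>" using reals_Archimedean2 by blast
      then have "real j * \<tau> > B" using \<tau>pos by (simp add: divide_less_eq)
      ultimately show False using B by (meson not_le order_trans)
    qed
  qed
  show ?thesis
  proof (cases "{\<omega>\<in>space M. \<exists>B. \<forall>n. X n \<omega> \<le> B} \<in> sets M")
    case True
    have "emeasure M {\<omega>\<in>space M. \<exists>B. \<forall>n. X n \<omega> \<le> B} \<le> emeasure M (\<Union>m. N m)"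
      by (rule emeasure_mono[OF sub]) auto
    then show ?thesis using UN0 by (simp add: measure_def)
  next
    case False
    then show ?thesis by (rule measure_notin_sets)
  qed
qed
theorem proposition1:
  fixes M :: "'a measure" and S :: "nat \<Rightarrow> 'a \<Rightarrow> nat" and X :: "nat \<Rightarrow> 'a \<Rightarrow> real"
    and kY kZ lY lZ :: "real \<Rightarrow> real" and c :: real
  assumes "kY \<in> borel_measurable borel" and "kZ \<in> borel_measurable borel"
    and "lY \<in> borel_measurable borel" and "lZ \<in> borel_measurable borel"
    and "\<And>x. x \<ge> 0 \<Longrightarrow> kY x \<ge> 1" and "\<And>x. x \<ge> 0 \<Longrightarrow> kZ x \<ge> 1"
    and "\<And>x. x \<ge> 0 \<Longrightarrow> lY x > 0" and "\<And>x. x \<ge> 0 \<Longrightarrow> lZ x > 0"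
    and "c > 0"
    and "\<And>x. x \<ge> 0 \<Longrightarrow> lY x \<le> c" and "\<And>x. x \<ge> 0 \<Longrightarrow> lZ x \<le> c"
    and "alt_semi_markov M S X (\<lambda>x \<tau>. gamma_cdf (kY x) (lY x) \<tau>)
                               (\<lambda>x \<tau>. gamma_cdf (kZ x) (lZ x) \<tau>)"
  shows "measure M {\<omega>\<in>space M. \<exists>B. \<forall>n. X n \<omega> \<le> B} = 0"
proof -
  have "\<And>x. x \<ge> 0 \<Longrightarrow> gamma_cdf (kY x) (lY x) (1/(4*c)) \<le> 1/2"
    using assms(5,7,10) by (intro gamma_bound) auto
  moreover have "\<And>x. x \<ge> 0 \<Longrightarrow> gamma_cdf (kZ x) (lZ x) (1/(4*c)) \<le> 1/2"
    using assms(6,8,11) by (intro gamma_bound) auto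
  ultimately show ?thesis
    using assms(9) by (intro main_prob[OF assms(12), where \<tau>="1/(4*c)"]) auto
qed

end
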